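(* Let $H=([n],E)$ be a hypergraph and $H'=([n],E')$ with $E'\subseteq E$. Let $H^*=([n],E^* )$ be any hypergraph such that for every edge $F\in E$ there exists $F^*\in E^*$ with $F^*\subseteq F$. Then for all $0\le i\le n$, \[0\le f_i(\chi_{H^*}(k))\le f_i(\chi_H(k))\le f_i(\chi_{H'}(k)).\]
   Context: Hypergraphs $([n],E)$ have edges that are nonempty subsets of $[n]$, with no edge of cardinality 1. A proper $k$-coloring is a map $[n]\to[k]$ such that no edge is monochromatic; $\chi_H(k)$ is the number of proper $k$-colorings, a polynomial in $k$ of degree at most $n$. For a polynomial $p(k)$ of degree at most $n$, its $f$-vector $(f_{-1},f_0,\dots,f_n)$ is defined by $p(k)=\sum_{i=0}^n f_i(p)\binom{k-1}{i}$ and $f_{-1}=1$. *)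

theory Defs
  imports Complex_Main "HOL-Library.FuncSet"
begin

definition hypergraph :: "nat \<Rightarrow> nat set set \<Rightarrow> bool" where
  "hypergraph n E \<longleftrightarrow> (\<forall>F\<in>E. F \<subseteq> {1..n} \<and> F \<noteq> {} \<and> card F \<noteq> 1)"

definition chi :: "nat \<Rightarrow> nat set set \<Rightarrow> nat \<Rightarrow> nat" where
  "chi n E k = card {c \<in> {1..n} \<rightarrow>\<^sub>E {1..k}.
      \<forall>F\<in>E. \<not> (\<exists>a. \<forall>v\<in>F. c v = a)}"

text \<open>Entries with index > n are set to 0 to make the coefficient vector unique.\<close>
definition fvec :: "nat \<Rightarrow> (nat \<Rightarrow> real) \<Rightarrow> nat \<Rightarrow> real" where
  "fvec n p = (THE f. (\<forall>i>n. f i = 0) \<and>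
      (\<forall>k::nat. k \<ge> 1 \<longrightarrow> p k = (\<Sum>i\<le>n. f i * real ((k - 1) choose i))))"

end

theory Submission
  imports Defs
begin

definition proper :: "nat set set \<Rightarrow> (nat \<Rightarrow> nat) \<Rightarrow> bool" where
  "proper E c \<longleftrightarrow> (\<forall>F\<in>E. \<not> (\<exists>a. \<forall>v\<in>F. c v = a))"

definition surjc :: "nat \<Rightarrow> nat set set \<Rightarrow> nat set \<Rightarrow> (nat \<Rightarrow> nat) set" where
  "surjc n E S = {c \<in> {1..n} \<rightarrow>\<^sub>E S. proper E c \<and> c ` {1..n} = S}"

definition acount :: "nat \<Rightarrow> nat set set \<Rightarrow> nat \<Rightarrow> nat" where
  "acount n E j = card (surjc n E {1..j})"

lemma surjc_finite: "finite T \<Longrightarrow> finite (surjc n E T)"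
  unfolding surjc_def
  by (rule finite_subset[of _ "{1..n} \<rightarrow>\<^sub>E T"]) (auto intro: finite_PiE)

lemma relabel_le:
  assumes fS: "finite S" and fT: "finite T" and cd: "card S = card T"
    and HE: "\<forall>F\<in>E. F \<subseteq> {1..n}"
  shows "card (surjc n E S) \<le> card (surjc n E T)"
proof -
  obtain \<sigma> where bij: "bij_betw \<sigma> S T" using finite_same_card_bij[OF fS fT cd] by blast
  hence inj: "inj_on \<sigma> S" and im: "\<sigma> ` S = T" by (auto simp: bij_betw_def)
  define \<phi> where "\<phi> c = restrict (\<sigma> \<circ> c) {1..n}" for c :: "nat \<Rightarrow> nat"
  have sub: "\<phi> ` surjc n E S \<subseteq> surjc n E T"
  proof
    fix d assume "d \<in> \<phi> ` surjc n E S"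
    then obtain c where c: "c \<in> surjc n E S" and d: "d = \<phi> c" by blast
    from c have cP: "c \<in> {1..n} \<rightarrow>\<^sub>E S" and cpr: "proper E c" and cim: "c ` {1..n} = S"
      by (auto simp: surjc_def)
    have "d \<in> {1..n} \<rightarrow>\<^sub>E T" using cP im unfolding d \<phi>_def by auto
    moreover have "d ` {1..n} = T"
    proof -
      have "d ` {1..n} = \<sigma> ` (c ` {1..n})" unfolding d \<phi>_def by (auto simp: image_iff)
      thus ?thesis using cim im by simp
    qed
    moreover have "proper E d"
      unfolding proper_def
    proof (intro ballI notI)
      fix F assume F: "F \<in> E" and "\<exists>a. \<forall>v\<in>F. d v = a"
      then obtain a where a: "\<forall>v\<in>F. d v = a" by blast
      have FS: "F \<subseteq> {1..n}" using HE F by blast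
      have "\<exists>b. \<forall>v\<in>F. c v = b"
      proof (cases "F = {}")
        case True thus ?thesis by simp
      next
        case False then obtain v0 where v0: "v0 \<in> F" by blast
        have "\<forall>v\<in>F. c v = c v0"
        proof
          fix v assume v: "v \<in> F"
          have "d v = \<sigma> (c v)" "d v0 = \<sigma> (c v0)" using FS v v0 unfolding d \<phi>_def by auto
          hence "\<sigma> (c v) = \<sigma> (c v0)" using a v v0 by metis
          moreover have "c v \<in> S" "c v0 \<in> S" using cP v v0 FS by auto
          ultimately show "c v = c v0" using inj by (auto dest: inj_onD)
        qed
        thus ?thesis by blast
      qed
      thus False using cpr F unfolding proper_def by blast
    qed
    ultimately show "d \<in> surjc n E T" by (simp add: surjc_def)
  qed
  have "inj_on \<phi> (surjc n E S)"
  proof (rule inj_onI)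
    fix c c' assume c: "c \<in> surjc n E S" and c': "c' \<in> surjc n E S" and eq: "\<phi> c = \<phi> c'"
    have cP: "c \<in> {1..n} \<rightarrow>\<^sub>E S" "c' \<in> {1..n} \<rightarrow>\<^sub>E S" using c c' by (auto simp: surjc_def)
    show "c = c'"
    proof (rule PiE_ext[OF cP])
      fix v assume v: "v \<in> {1..n}"
      have "\<sigma> (c v) = \<sigma> (c' v)" using fun_cong[OF eq, of v] v unfolding \<phi>_def by auto
      moreover have "c v \<in> S" "c' v \<in> S" using cP v by auto
      ultimately show "c v = c' v" using inj by (auto dest: inj_onD)
    qed
  qed
  thus ?thesis using card_inj_on_le[OF _ sub surjc_finite[OF fT]] by blast
qed

lemma card_surjc:
  assumes "finite S" "\<forall>F\<in>E. F \<subseteq> {1..n}"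
  shows "card (surjc n E S) = acount n E (card S)"
proof -
  have c: "card {1..card S} = card S" by simp
  show ?thesis unfolding acount_def
    using relabel_le[OF assms(1) _ c[symmetric] assms(2)] relabel_le[OF _ assms(1) c assms(2)]
    by (simp add: le_antisym)
qed

lemma acount_zero:
  assumes "n < j" shows "acount n E j = 0"
proof -
  have "surjc n E {1..j} = {}"
  proof (rule ccontr)
    assume "surjc n E {1..j} \<noteq> {}"
    then obtain c where "c ` {1..n} = {1..j}" by (auto simp: surjc_def)
    hence "card {1..j} \<le> card {1..n}" by (metis card_image_le finite_atLeastAtMost)
    thus False using assms by simp
  qed
  thus ?thesis by (simp add: acount_def)
qed

lemma acount_mono:
  assumes "\<And>c. proper E c \<Longrightarrow> proper E' c"
  shows "acount n E j \<le> acount n E' j"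
  unfolding acount_def
  by (rule card_mono[OF surjc_finite]) (auto simp: surjc_def assms)

lemma chi_decomp:
  assumes HE: "\<forall>F\<in>E. F \<subseteq> {1..n}"
  shows "chi n E k = (\<Sum>S\<in>Pow {1..k}. card (surjc n E S))"
proof -
  have eq: "{c \<in> {1..n} \<rightarrow>\<^sub>E {1..k}. \<forall>F\<in>E. \<not> (\<exists>a. \<forall>v\<in>F. c v = a)}
      = (\<Union>S\<in>Pow {1..k}. surjc n E S)"
  proof
    show "{c \<in> {1..n} \<rightarrow>\<^sub>E {1..k}. \<forall>F\<in>E. \<not> (\<exists>a. \<forall>v\<in>F. c v = a)} \<subseteq> (\<Union>S\<in>Pow {1..k}. surjc n E S)"
    proof
      fix c assume c: "c \<in> {c \<in> {1..n} \<rightarrow>\<^sub>E {1..k}. \<forall>F\<in>E. \<not> (\<exists>a. \<forall>v\<in>F. c v = a)}"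
      have "c \<in> surjc n E (c ` {1..n})" using c by (auto simp: surjc_def proper_def PiE_iff)
      moreover have "c ` {1..n} \<in> Pow {1..k}" using c by auto
      ultimately show "c \<in> (\<Union>S\<in>Pow {1..k}. surjc n E S)" by blast
    qed
  next
    show "(\<Union>S\<in>Pow {1..k}. surjc n E S) \<subseteq> {c \<in> {1..n} \<rightarrow>\<^sub>E {1..k}. \<forall>F\<in>E. \<not> (\<exists>a. \<forall>v\<in>F. c v = a)}"
      by (auto simp: surjc_def proper_def PiE_iff)
  qed
  show ?thesis unfolding chi_def eq
  proof (rule card_UN_disjoint)
    show "\<forall>S\<in>Pow {1..k}. finite (surjc n E S)"
      using surjc_finite finite_subset[OF _ finite_atLeastAtMost] by blast
  qed (auto simp: surjc_def)
qed

lemma pow_group: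
  fixes g :: "nat \<Rightarrow> nat"
  assumes "finite A"
  shows "(\<Sum>S\<in>Pow A. g (card S)) = (\<Sum>j\<le>card A. (card A choose j) * g j)"
proof -
  have "(\<Sum>S\<in>Pow A. g (card S)) = (\<Sum>j\<le>card A. \<Sum>S\<in>{S. S \<in> Pow A \<and> card S = j}. g (card S))"
    by (rule sum.group[symmetric]) (auto simp: assms card_mono)
  also have "\<dots> = (\<Sum>j\<le>card A. (card A choose j) * g j)"
  proof (rule sum.cong[OF refl])
    fix j
    have "(\<Sum>S\<in>{S. S \<in> Pow A \<and> card S = j}. g (card S)) = (\<Sum>S\<in>{S. S \<subseteq> A \<and> card S = j}. g j)"
      by (rule sum.cong) auto
    also have "\<dots> = (card A choose j) * g j" using n_subsets[OF assms] by simp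
    finally show "(\<Sum>S\<in>{S. S \<in> Pow A \<and> card S = j}. g (card S)) = (card A choose j) * g j" .
  qed
  finally show ?thesis .
qed

lemma chi_formula:
  assumes HE: "\<forall>F\<in>E. F \<subseteq> {1..n}"
  shows "chi n E k = (\<Sum>j\<le>n. acount n E j * (k choose j))"
proof -
  have "chi n E k = (\<Sum>S\<in>Pow {1..k}. acount n E (card S))"
    unfolding chi_decomp[OF HE]
    by (rule sum.cong[OF refl]) (auto intro!: card_surjc HE intro: finite_subset)
  also have "\<dots> = (\<Sum>j\<le>k. (k choose j) * acount n E j)"
    using pow_group[of "{1..k}" "acount n E"] by simp
  also have "\<dots> = (\<Sum>j\<le>n+k. (k choose j) * acount n E j)"
    by (rule sum.mono_neutral_left) auto
  also have "\<dots> = (\<Sum>j\<le>n. (k choose j) * acount n E j)"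
    by (rule sum.mono_neutral_right) (auto simp: acount_zero)
  finally show ?thesis by (simp add: mult.commute)
qed

lemma shift:
  fixes a :: "nat \<Rightarrow> nat"
  shows "(\<Sum>j\<le>n. a j * (Suc m choose j)) + a (Suc n) * (m choose n)
     = (\<Sum>i\<le>n. (a i + a (Suc i)) * (m choose i))"
proof (induction n)
  case 0 thus ?case by simp
next
  case (Suc n)
  have "(\<Sum>j\<le>Suc n. a j * (Suc m choose j)) + a (Suc (Suc n)) * (m choose Suc n)
      = ((\<Sum>j\<le>n. a j * (Suc m choose j)) + a (Suc n) * (m choose n))
        + (a (Suc n) + a (Suc (Suc n))) * (m choose Suc n)"
    by (simp add: algebra_simps)
  also have "\<dots> = (\<Sum>i\<le>Suc n. (a i + a (Suc i)) * (m choose i))"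
    using Suc.IH by simp
  finally show ?case .
qed

lemma coeff_unique:
  fixes f g :: "nat \<Rightarrow> real"
  assumes f0: "\<forall>i>n. f i = 0" and g0: "\<forall>i>n. g i = 0"
    and eq: "\<forall>m. (\<Sum>i\<le>n. f i * real (m choose i)) = (\<Sum>i\<le>n. g i * real (m choose i))"
  shows "f = g"
proof -
  define d where "d i = f i - g i" for i
  have dz: "(\<Sum>i\<le>n. d i * real (m choose i)) = 0" for m
    using eq by (simp add: d_def left_diff_distrib sum_subtractf)
  have "d i = 0" for i
  proof (induction i rule: less_induct)
    case (less i)
    show ?case
    proof (cases "i \<le> n")
      case False thus ?thesis using f0 g0 by (simp add: d_def)
    next
      case True
      have "0 = (\<Sum>j\<le>n. d j * real (i choose j))" using dz by simp
      also have "\<dots> = (\<Sum>j\<le>i. d j * real (i choose j))"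
        by (rule sum.mono_neutral_right) (auto simp: True)
      also have "\<dots> = (\<Sum>j<i. d j * real (i choose j)) + d i"
        by (simp add: lessThan_Suc_atMost[symmetric])
      also have "(\<Sum>j<i. d j * real (i choose j)) = 0" using less.IH by simp
      finally show ?thesis by simp
    qed
  qed
  thus ?thesis by (auto simp: d_def fun_eq_iff)
qed

lemma fvec_chi:
  assumes HE: "\<forall>F\<in>E. F \<subseteq> {1..n}"
  shows "fvec n (\<lambda>k. real (chi n E k))
     = (\<lambda>i. if i \<le> n then real (acount n E i + acount n E (Suc i)) else 0)"
  unfolding fvec_def
proof (rule the_equality)
  let ?f = "(\<lambda>i. if i \<le> n then real (acount n E i + acount n E (Suc i)) else 0)"
  have key: "real (chi n E (Suc m)) = (\<Sum>i\<le>n. ?f i * real (m choose i))" for m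
  proof -
    have "chi n E (Suc m) = (\<Sum>i\<le>n. (acount n E i + acount n E (Suc i)) * (m choose i))"
      using chi_formula[OF HE, of "Suc m"] shift[where a="acount n E" and n=n and m=m] acount_zero[of n "Suc n" E]
      by simp
    hence "real (chi n E (Suc m)) = (\<Sum>i\<le>n. real (acount n E i + acount n E (Suc i)) * real (m choose i))"
      by (simp add: of_nat_sum)
    also have "\<dots> = (\<Sum>i\<le>n. ?f i * real (m choose i))" by (rule sum.cong) auto
    finally show ?thesis .
  qed
  show "(\<forall>i>n. ?f i = 0) \<and> (\<forall>k. 1 \<le> k \<longrightarrow> real (chi n E k) = (\<Sum>i\<le>n. ?f i * real ((k - 1) choose i)))"
  proof (intro conjI allI impI)
    fix k :: nat assume "1 \<le> k"
    then obtain m where k: "k = Suc m" by (cases k) auto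
    show "real (chi n E k) = (\<Sum>i\<le>n. ?f i * real ((k - 1) choose i))" using key[of m] k by simp
  qed simp
  fix g assume g: "(\<forall>i>n. g i = 0) \<and> (\<forall>k. 1 \<le> k \<longrightarrow> real (chi n E k) = (\<Sum>i\<le>n. g i * real ((k - 1) choose i)))"
  show "g = ?f"
  proof (rule coeff_unique[of n])
    show "\<forall>i>n. g i = 0" using g by blast
    show "\<forall>i>n. ?f i = 0" by simp
    show "\<forall>m. (\<Sum>i\<le>n. g i * real (m choose i)) = (\<Sum>i\<le>n. ?f i * real (m choose i))"
    proof
      fix m
      have "real (chi n E (Suc m)) = (\<Sum>i\<le>n. g i * real (m choose i))" using g by fastforce
      thus "(\<Sum>i\<le>n. g i * real (m choose i)) = (\<Sum>i\<le>n. ?f i * real (m choose i))" using key[of m] by simp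
    qed
  qed
qed

theorem mainTheorem7:
  fixes n :: nat and E E' Estar :: "nat set set"
  assumes "hypergraph n E"
    and "hypergraph n E'" and "E' \<subseteq> E"
    and "hypergraph n Estar"
    and "\<forall>F\<in>E. \<exists>Fs\<in>Estar. Fs \<subseteq> F"
  shows "\<forall>i\<le>n.
    0 \<le> fvec n (\<lambda>k. real (chi n Estar k)) i \<and>
    fvec n (\<lambda>k. real (chi n Estar k)) i \<le> fvec n (\<lambda>k. real (chi n E k)) i \<and>
    fvec n (\<lambda>k. real (chi n E k)) i \<le> fvec n (\<lambda>k. real (chi n E' k)) i"
proof -
  have H1: "\<forall>F\<in>E. F \<subseteq> {1..n}" and H2: "\<forall>F\<in>E'. F \<subseteq> {1..n}" and H3: "\<forall>F\<in>Estar. F \<subseteq> {1..n}"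
    using assms(1,2,4) by (auto simp: hypergraph_def)
  have p1: "proper E' c" if "proper E c" for c
    using that assms(3) by (auto simp: proper_def)
  have p2: "proper E c" if "proper Estar c" for c
    unfolding proper_def
  proof (intro ballI notI)
    fix F assume F: "F \<in> E" and "\<exists>a. \<forall>v\<in>F. c v = a"
    then obtain a where a: "\<forall>v\<in>F. c v = a" by blast
    obtain Fs where "Fs \<in> Estar" "Fs \<subseteq> F" using assms(5) F by blast
    thus False using that a unfolding proper_def by blast
  qed
  show ?thesis
  proof (intro allI impI conjI)
    fix i assume i: "i \<le> n"
    show "0 \<le> fvec n (\<lambda>k. real (chi n Estar k)) i" unfolding fvec_chi[OF H3] by simp
    show "fvec n (\<lambda>k. real (chi n Estar k)) i \<le> fvec n (\<lambda>k. real (chi n E k)) i"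
      unfolding fvec_chi[OF H3] fvec_chi[OF H1] using i acount_mono[OF p2, where n=n and j=i] acount_mono[OF p2, where n=n and j="Suc i"]
      by (simp add: add_mono)
    show "fvec n (\<lambda>k. real (chi n E k)) i \<le> fvec n (\<lambda>k. real (chi n E' k)) i"
      unfolding fvec_chi[OF H2] fvec_chi[OF H1] using i acount_mono[OF p1, where n=n and j=i] acount_mono[OF p1, where n=n and j="Suc i"]
      by (simp add: add_mono)
  qed
qed

end
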